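(* Let $0 < b < a \leq 1$. Then \[ (a-b)\left(\frac{1}{ab} + \frac{1}{b+1}\right) < \psi(a) - \psi(b) < (a-b)\left(\frac1{ab} + \frac{\pi^2}6\right). \] Further, if in addition $a, b > \frac12$, then \[ \psi(a) - \psi(b) < (a - b)\left(\frac1{ab} + \frac{\pi^2}{6} - \frac59\right). \]
   Context: $\psi=\Gamma'/\Gamma$ is the digamma function. *)

theory Defs
  imports "HOL-Analysis.Analysis"
begin

end

theory Submission
  imports Defs
begin

lemma sums_strict_less:
  fixes f g :: "nat \<Rightarrow> real"
  assumes "f sums x" "g sums y" "\<And>n. f n < g n"
  shows "x < y"
proof -
  have d: "(\<lambda>n. g n - f n) sums (y - x)" using sums_diff[OF assms(2,1)] .
  have "0 < suminf (\<lambda>n. g n - f n)"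
    by (rule suminf_pos) (use d assms(3) sums_summable in auto)
  with d show ?thesis using sums_unique by fastforce
qed

theorem lemma5p2:
  fixes a b :: real
  assumes "0 < b" and "b < a" and "a \<le> 1"
  shows "(a - b) * (1 / (a * b) + 1 / (b + 1)) < Digamma a - Digamma b \<and>
         Digamma a - Digamma b < (a - b) * (1 / (a * b) + pi ^ 2 / 6) \<and>
         (a > 1/2 \<and> b > 1/2 \<longrightarrow>
           Digamma a - Digamma b < (a - b) * (1 / (a * b) + pi ^ 2 / 6 - 5 / 9))"
proof -
  define D where "D = Digamma a - Digamma b"
  define t where "t k = 1 / ((a + real k) * (b + real k))" for k
  have a0: "a > 0" using assms by simp
  have sa: "(\<lambda>k. inverse (real (Suc k)) - inverse (a + real k)) sums (Digamma a + euler_mascheroni)"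
    using summable_Digamma[of a] a0 by (simp add: Digamma_def summable_sums)
  have sb: "(\<lambda>k. inverse (real (Suc k)) - inverse (b + real k)) sums (Digamma b + euler_mascheroni)"
    using summable_Digamma[of b] assms by (simp add: Digamma_def summable_sums)
  have "(\<lambda>k. (inverse (real (Suc k)) - inverse (a + real k)) - (inverse (real (Suc k)) - inverse (b + real k))) sums D"
    using sums_diff[OF sa sb] by (simp add: D_def)
  moreover have "\<And>k. (inverse (real (Suc k)) - inverse (a + real k)) - (inverse (real (Suc k)) - inverse (b + real k)) = (a - b) * t k"
  proof -
    fix k
    have p1: "a + real k > 0" "b + real k > 0" using assms by auto
    have "(inverse (real (Suc k)) - inverse (a + real k)) - (inverse (real (Suc k)) - inverse (b + real k)) = inverse (b + real k) - inverse (a + real k)" by simp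
    also have "\<dots> = (a - b) * t k" using p1 by (simp add: t_def field_simps)
    finally show "(inverse (real (Suc k)) - inverse (a + real k)) - (inverse (real (Suc k)) - inverse (b + real k)) = (a - b) * t k" .
  qed
  ultimately have "(\<lambda>k. (a - b) * t k) sums D" by simp
  hence "(\<lambda>k. t k) sums (D / (a - b))"
    using sums_divide[of "\<lambda>k. (a - b) * t k" D "a - b"] assms by simp
  hence "(\<lambda>k. t (Suc k)) sums (D / (a - b) - t 0)"
    using sums_Suc_iff[of t] by simp
  hence ts: "(\<lambda>k. t (Suc k)) sums (D / (a - b) - 1 / (a * b))" by (simp add: t_def)
  define S where "S = D / (a - b) - 1 / (a * b)"
  have DS: "D = (a - b) * (1 / (a * b) + S)" using assms by (simp add: S_def field_simps)
  have ab: "a - b > 0" using assms by simp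
  have pi6: "(\<lambda>k. 1 / (real k + 1)^2) sums (pi^2 / 6)" using inverse_squares_sums by (simp add: add.commute)
  have tel: "(\<lambda>k. inverse (b + real (Suc k)) - inverse (b + real (Suc (Suc k)))) sums (inverse (b + real (Suc 0)) - 0)"
    by (intro telescope_sums' filterlim_compose[OF tendsto_inverse_0]
              tendsto_add_filterlim_at_infinity[OF tendsto_const]
              filterlim_at_top_imp_at_infinity filterlim_compose[OF filterlim_real_sequentially] filterlim_Suc)
  have L: "1 / (b + 1) < S"
  proof (rule sums_strict_less[OF _ ts[folded S_def]])
    show "(\<lambda>k. inverse (b + real (Suc k)) - inverse (b + real (Suc (Suc k)))) sums (1 / (b + 1))"
      using tel by (simp add: divide_inverse add_ac)
    fix k
    have "inverse (b + real (Suc k)) - inverse (b + real (Suc (Suc k))) = 1 / ((b + real k + 1) * (b + real k + 2))"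
      using assms by (simp add: field_simps)
    also have "\<dots> < 1 / ((a + real k + 1) * (b + real k + 1))"
      using assms by (intro divide_strict_left_mono mult_strict_right_mono mult_pos_pos) auto
    also have "\<dots> = t (Suc k)" by (simp add: t_def add_ac)
    finally show "inverse (b + real (Suc k)) - inverse (b + real (Suc (Suc k))) < t (Suc k)" .
  qed
  have U: "S < pi^2 / 6"
  proof (rule sums_strict_less[OF ts[folded S_def] pi6])
    fix k
    have "(real k + 1)^2 < (a + real (Suc k)) * (b + real (Suc k))"
      using assms unfolding power2_eq_square by (intro mult_strict_mono) auto
    thus "t (Suc k) < 1 / (real k + 1)^2"
      unfolding t_def using assms by (intro divide_strict_left_mono) (auto intro!: mult_pos_pos)
  qed
  have U2: "S < pi^2 / 6 - 5 / 9" if h: "a > 1/2" "b > 1/2"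
  proof -
    define g where "g k = 1 / (real k + 1)^2 - (if k = 0 then 5/9 else 0)" for k
    have "(\<lambda>k. (if k = 0 then 5/9 else 0)) sums (5/9 :: real)"
      using sums_single[of 0 "\<lambda>_. 5/9 :: real"] by simp
    hence gs: "g sums (pi^2 / 6 - 5/9)" unfolding g_def by (intro sums_diff pi6)
    show ?thesis
    proof (rule sums_strict_less[OF ts[folded S_def] gs])
      fix k
      show "t (Suc k) < g k"
      proof (cases "k = 0")
        case True
        have "9/4 < (a + 1) * (b + 1)"
        proof -
          have "(3/2) * (3/2) < (a + 1) * (b + 1)" using h by (intro mult_strict_mono) auto
          thus ?thesis by simp
        qed
        hence "1 / ((a + 1) * (b + 1)) < 1 / (9/4)"
          by (intro divide_strict_left_mono) auto
        thus ?thesis using True by (simp add: t_def g_def add_ac)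
      next
        case False
        have "(real k + 1)^2 < (a + real (Suc k)) * (b + real (Suc k))"
          using assms unfolding power2_eq_square by (intro mult_strict_mono) auto
        hence "t (Suc k) < 1 / (real k + 1)^2"
          unfolding t_def using assms by (intro divide_strict_left_mono) (auto intro!: mult_pos_pos)
        thus ?thesis using False by (simp add: g_def)
      qed
    qed
  qed
  show ?thesis
    unfolding D_def[symmetric] DS
    using L U U2 ab by (auto intro: mult_strict_left_mono)
qed

end
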